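(* Let $\mathcal{I}$ be an ideal on $\omega$ (containing $\mathrm{fin}$) which is $F_\sigma$, or which is (an isomorphic copy on $\omega$ of) $\mathrm{fin}^\alpha$ for some $\alpha < \omega_1$. Then $\mathcal{I}$ is uniformly weakly $P^+$.
   Context: $\mathrm{fin}$ is the ideal of finite subsets of $\omega$; $\mathcal{I}^+$ denotes subsets not in $\mathcal{I}$; $A \subseteq_{\mathcal{I}} B$ means $A\setminus B \in \mathcal{I}$. $F_\sigma$ refers to $\mathcal{I}$ as a subset of $2^\omega$. Ideals $\mathcal{I}$ on $\Omega$ and $\mathcal{J}$ on $\Omega'$ are isomorphic if there is a bijection $f:\Omega\to\Omega'$ with $A \in \mathcal{J} \iff f^{-1}(A) \in \mathcal{I}$ for all $A \subseteq \Omega'$. The ideals $\mathrm{fin}^\alpha$ on countable sets $X^\alpha$ ($1\le\alpha<\omega_1$) are defined recursively: $\mathrm{fin}^1 = \mathrm{fin}$ on $X^1=\omega$; $\mathrm{fin}^{\alpha+1}$ is the ideal on $X^{\alpha+1} = \omega \times X^\alpha$ given by $A \in \mathrm{fin}^{\alpha+1}$ iff $\{n : (A)_n \notin \mathrm{fin}^\alpha\}$ is finite, where $(A)_n = \{y : (n,y)\in A\}$; for limit $\alpha$, fixing a strictly increasing sequence $\alpha_n$ with supremum $\alpha$, $\mathrm{fin}^\alpha$ is the ideal on $X^\alpha = \bigcup_n \{n\}\times X^{\alpha_n}$ given by $A \in \mathrm{fin}^\alpha$ iff $\{n : A \cap (\{n\}\times X^{\alpha_n}) \notin \mathrm{fin}^{\alpha_n}\}$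 is finite (identifying $\{n\}\times X^{\alpha_n}$ with $X^{\alpha_n}$). $\mathcal{I}$ is uniformly weakly $P^+$ if there is a Borel function $\Phi$ such that for every $\subseteq$-decreasing sequence $\langle A_n : n\in\omega\rangle$ of $\mathcal{I}$-positive sets, $\Phi(\langle A_n\rangle)\in\mathcal{I}^+$ and $\Phi(\langle A_n\rangle)\subseteq_{\mathcal{I}} A_n$ for every $n$. *)

theory Defs
  imports "HOL-Analysis.Analysis"
begin

section \<open>Cantor space 2^omega, identified with nat \<Rightarrow> bool (product of discrete bool)\<close>

definition chi :: "nat set \<Rightarrow> (nat \<Rightarrow> bool)" where
  "chi A = (\<lambda>n. n \<in> A)"

definition ideal_on :: "'a set \<Rightarrow> 'a set set \<Rightarrow> bool" where
  "ideal_on X I \<longleftrightarrow> I \<subseteq> Pow X \<and> {} \<in> I \<and> X \<notin> I \<and>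
     (\<forall>A B. A \<in> I \<longrightarrow> B \<subseteq> A \<longrightarrow> B \<in> I) \<and>
     (\<forall>A B. A \<in> I \<longrightarrow> B \<in> I \<longrightarrow> A \<union> B \<in> I)"

definition contains_fin :: "nat set set \<Rightarrow> bool" where
  "contains_fin I \<longleftrightarrow> (\<forall>A. finite A \<longrightarrow> A \<in> I)"

definition ideal_iso :: "'a set \<Rightarrow> 'a set set \<Rightarrow> 'b set \<Rightarrow> 'b set set \<Rightarrow> bool" where
  "ideal_iso \<Omega> I \<Omega>' J \<longleftrightarrow> (\<exists>f. bij_betw f \<Omega> \<Omega>' \<and>
     (\<forall>A. A \<subseteq> \<Omega>' \<longrightarrow> (A \<in> J \<longleftrightarrow> f -` A \<inter> \<Omega> \<in> I)))"

text \<open>Countable ordinals alpha are represented by well-orders r on subsets of nat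
  (compared with the library's ordinal comparisons <o, \<le>o, =o).  The carriers X^alpha
  are realised as sets of finite lists of naturals: X^1 = {[n]}, and a point (n,y) of
  omega \<times> X^alpha (resp. of {n} \<times> X^{alpha_n}) is the list n # y.
  \<open>fin_pow r X J\<close> means: X = X^alpha and J = fin^alpha, where alpha is the order type
  of r, for some choice of the fundamental sequences at limit stages.\<close>

definition section_of :: "nat list set \<Rightarrow> nat \<Rightarrow> nat list set" where
  "section_of A n = {y. n # y \<in> A}"

inductive fin_pow :: "nat rel \<Rightarrow> nat list set \<Rightarrow> nat list set set \<Rightarrow> bool" where
  one: "\<lbrakk>Well_order r; card (Field r) = 1\<rbrakk> \<Longrightarrow>
        fin_pow r (range (\<lambda>n. [n])) {A. A \<subseteq> range (\<lambda>n. [n]) \<and> finite A}"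
| succ: "\<lbrakk>fin_pow r X J; Well_order r'; m \<in> Field r'; \<forall>x\<in>Field r'. (x, m) \<in> r';
          (Restr r' (Field r' - {m}), r) \<in> ordIso\<rbrakk> \<Longrightarrow>
        fin_pow r' (\<Union>n. (\<lambda>y. n # y) ` X)
          {A. A \<subseteq> (\<Union>n. (\<lambda>y. n # y) ` X) \<and> finite {n. section_of A n \<notin> J}}"
| limit: "\<lbrakk>\<forall>n. fin_pow (s n) (X n) (J n); \<forall>n. (s n, s (Suc n)) \<in> ordLess;
           Well_order r; \<forall>n. (s n, r) \<in> ordLess; \<forall>t::nat rel. (t, r) \<in> ordLess \<longrightarrow> (\<exists>n. (t, s n) \<in> ordLeq)\<rbrakk> \<Longrightarrow>
        fin_pow r (\<Union>n. (\<lambda>y. n # y) ` X n)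
          {A. A \<subseteq> (\<Union>n. (\<lambda>y. n # y) ` X n) \<and> finite {n. section_of A n \<notin> J n}}"

definition uniformly_weakly_Pplus :: "nat set set \<Rightarrow> bool" where
  "uniformly_weakly_Pplus I \<longleftrightarrow>
     (\<exists>\<Phi> :: (nat \<Rightarrow> nat \<Rightarrow> bool) \<Rightarrow> (nat \<Rightarrow> bool).
        \<Phi> \<in> borel_measurable borel \<and>
        (\<forall>A :: nat \<Rightarrow> nat set.
           (\<forall>n. A n \<notin> I) \<and> (\<forall>n. A (Suc n) \<subseteq> A n) \<longrightarrow>
             (let B = {k. \<Phi> (\<lambda>n. chi (A n)) k} in
                B \<notin> I \<and> (\<forall>n. B - A n \<in> I))))"

end

theory Submission
  imports Defs
begin

instance bool :: second_countable_topology
proof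
  show "\<exists>B::bool set set. countable B \<and> open = generate_topology B"
    by (rule exI[of _ UNIV]) (auto simp: fun_eq_iff open_discrete intro: generate_topology.Basis)
qed

lemma compact_cantor: "compact (UNIV :: (nat \<Rightarrow> bool) set)"
proof -
  have "compact_space (product_topology (\<lambda>i::nat. euclidean::bool topology) UNIV)"
  proof -
    have "compact_space (euclidean::bool topology)"
      by (simp add: compact_space_def finite_imp_compact)
    then show ?thesis by (simp add: compact_space_product_topology)
  qed
  then show ?thesis
    by (simp add: euclidean_product_topology compact_space_def)
qed

lemma closed_coord: "closed {y::nat \<Rightarrow> bool. y i}"
proof -
  have "{y::nat \<Rightarrow> bool. y i} = (\<lambda>y. y i) -` {True}" by auto
  moreover have "closed ((\<lambda>y::nat\<Rightarrow>bool. y i) -` {True})"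
    by (rule closed_vimage) (auto intro: continuous_on_product_coordinates)
  ultimately show ?thesis by simp
qed

lemma borel_coord: "{x::'a::countable \<Rightarrow> bool. x i} \<in> sets borel"
proof -
  have "{x::'a \<Rightarrow> bool. x i} = (\<lambda>y. y i) -` {True}" by auto
  moreover have "open ((\<lambda>y::'a\<Rightarrow>bool. y i) -` {True})"
    by (rule open_vimage) (auto intro: continuous_on_product_coordinates open_discrete)
  ultimately show ?thesis by simp
qed

lemma pred_coord[measurable]: "Measurable.pred borel (\<lambda>x::'a::countable \<Rightarrow> bool. x i)"
  using borel_coord[of i] unfolding pred_def by simp

lemma pred_coord2[measurable]: "Measurable.pred borel (\<lambda>x::nat \<Rightarrow> nat \<Rightarrow> bool. x n i)"
proof -
  have "(\<lambda>x::nat \<Rightarrow> nat \<Rightarrow> bool. x n) \<in> borel_measurable borel" by simp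
  then show ?thesis by measurable
qed

lemma sets_borel_bool: "sets (borel :: bool measure) = sets (count_space UNIV)"
proof -
  have "A \<in> sets (borel :: bool measure)" for A :: "bool set"
    by (rule borel_open) (simp add: open_discrete)
  then show ?thesis by auto
qed

lemma pred_to_borel: "Measurable.pred M P \<Longrightarrow> P \<in> borel_measurable M"
proof -
  assume "Measurable.pred M P"
  moreover have "measurable M (count_space UNIV) = measurable M (borel :: bool measure)"
    by (rule measurable_cong_sets[OF refl sets_borel_bool[symmetric]])
  ultimately show ?thesis by simp
qed

lemma pred_finite_set:
  assumes "finite F" "\<And>i. Measurable.pred M (\<lambda>x. g x i)"
  shows "Measurable.pred M (\<lambda>x. P {i\<in>F. g x i})"
proof -
  have eq: "(\<lambda>x. P {i\<in>F. g x i}) = (\<lambda>x. \<exists>S\<in>Pow F. P S \<and> (\<forall>i\<in>F. g x i \<longleftrightarrow> i \<in> S))"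
  proof (rule ext, rule iffI)
    fix x assume "P {i\<in>F. g x i}"
    then show "\<exists>S\<in>Pow F. P S \<and> (\<forall>i\<in>F. g x i \<longleftrightarrow> i \<in> S)"
      by (intro bexI[of _ "{i\<in>F. g x i}"]) auto
  next
    fix x assume "\<exists>S\<in>Pow F. P S \<and> (\<forall>i\<in>F. g x i \<longleftrightarrow> i \<in> S)"
    then obtain S where S: "S \<subseteq> F" "P S" "\<forall>i\<in>F. g x i \<longleftrightarrow> i \<in> S" by auto
    then have "{i\<in>F. g x i} = S" by auto
    then show "P {i\<in>F. g x i}" using S by simp
  qed
  show ?thesis unfolding eq
  proof (rule pred_intros_finite(4))
    show "finite (Pow F)" using assms(1) by simp
    fix S assume "S \<in> Pow F"
    have c1: "Measurable.pred M (\<lambda>x. P S)" by (rule measurable_const) simp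
    have c2: "Measurable.pred M (\<lambda>x. i \<in> S)" for i by (rule measurable_const) simp
    show "Measurable.pred M (\<lambda>x. P S \<and> (\<forall>i\<in>F. g x i \<longleftrightarrow> i \<in> S))"
      by (intro pred_intros_logic(3) c1 pred_intros_finite(3) assms(1) pred_intros_logic(6) assms(2) c2)
  qed
qed



lemma chi_inj: "chi A = chi B \<Longrightarrow> A = B"
  by (auto simp: chi_def fun_eq_iff)

lemma fsigma_case:
  fixes I :: "nat set set"
  assumes id: "ideal_on (UNIV :: nat set) I"
    and cf: "contains_fin I"
    and fs: "fsigma_in euclidean (chi ` I)"
  shows "uniformly_weakly_Pplus I"
proof -
  have her: "B \<in> I" if "A \<in> I" "B \<subseteq> A" for A B using id that unfolding ideal_on_def by blast
  have un: "A \<union> B \<in> I" if "A \<in> I" "B \<in> I" for A B using id that unfolding ideal_on_def by blast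
  have fin: "A \<in> I" if "finite A" for A using cf that unfolding contains_fin_def by blast
  from fs obtain C :: "nat \<Rightarrow> (nat \<Rightarrow> bool) set" where CC: "(\<forall>n. closedin euclidean (C n)) \<and> (\<forall>n. C n \<subseteq> C (Suc n)) \<and> \<Union> (range C) = chi ` I"
    by (subst (asm) fsigma_in_ascending) blast
  then have Ccl: "\<And>n. closedin euclidean (C n)" and CU: "\<Union> (range C) = chi ` I" by auto
  have Ccl': "closed (C n)" for n using Ccl closed_closedin by blast
  define K where "K m A \<longleftrightarrow> (\<forall>k. \<exists>E. chi E \<in> C m \<and> A \<inter> {..<k} \<subseteq> E)" for m A
  have Kher: "K m T" if "K m S" "T \<subseteq> S" for m S T using that unfolding K_def by blast
  have KI: "A \<in> I" if "K m A" for m A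
  proof -
    define F where "F k = C m \<inter> (\<Inter>i\<in>{i. i < k \<and> i \<in> A}. {y. y i})" for k
    have Fcl: "closed (F k)" for k
      unfolding F_def by (intro closed_Int Ccl' closed_INT) (auto intro: closed_coord)
    have Fmono: "F k \<subseteq> F k'" if "k' \<le> k" for k k' using that unfolding F_def by auto
    have Fne: "F k \<noteq> {}" for k
    proof -
      obtain E where "chi E \<in> C m" "A \<inter> {..<k} \<subseteq> E" using \<open>K m A\<close> unfolding K_def by blast
      then have "chi E \<in> F k" unfolding F_def by (auto simp: chi_def)
      then show ?thesis by blast
    qed
    have "UNIV \<inter> (\<Inter>k\<in>UNIV. F k) \<noteq> {}"
    proof (rule compact_imp_fip_image[OF compact_cantor])
      show "closed (F k)" for k by (rule Fcl)
      fix I' :: "nat set" assume "finite I'" "I' \<subseteq> UNIV"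
      show "UNIV \<inter> (\<Inter>i\<in>I'. F i) \<noteq> {}"
      proof (cases "I' = {}")
        case True then show ?thesis by simp
      next
        case False
        have "F (Max I') \<subseteq> F i" if "i \<in> I'" for i
          by (rule Fmono[OF Max_ge[OF \<open>finite I'\<close> that]])
        then have "F (Max I') \<subseteq> (\<Inter>i\<in>I'. F i)" by (intro INT_greatest)
        then show ?thesis using Fne[of "Max I'"] by blast
      qed
    qed
    then obtain y where y: "\<And>k. y \<in> F k" by blast
    then have "y \<in> C m" unfolding F_def by blast
    then obtain E where "E \<in> I" "y = chi E" using CU by blast
    have "A \<subseteq> E"
    proof
      fix i assume "i \<in> A"
      then have "y i" using y[of "Suc i"] unfolding F_def by auto
      then show "i \<in> E" using \<open>y = chi E\<close> by (simp add: chi_def)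
    qed
    then show ?thesis using her \<open>E \<in> I\<close> by blast
  qed
  define \<Phi> where "\<Phi> x j = (\<exists>n\<le>j. x n j \<and> K n {i\<in>{n..<j}. x n i})"
    for x :: "nat \<Rightarrow> nat \<Rightarrow> bool" and j
  have "\<Phi> \<in> borel_measurable borel"
  proof (rule measurable_coordinatewise_then_product)
    fix j
    have [measurable]: "Measurable.pred borel (\<lambda>x::nat \<Rightarrow> nat \<Rightarrow> bool. K n {i\<in>{n..<j}. x n i})" for n
      by (rule pred_finite_set) auto
    show "(\<lambda>x. \<Phi> x j) \<in> borel_measurable borel"
      unfolding \<Phi>_def by (rule pred_to_borel) measurable
  qed
  moreover have "(let B = {k. \<Phi> (\<lambda>n. chi (A n)) k} in B \<notin> I \<and> (\<forall>n. B - A n \<in> I))"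
    if Apos: "\<forall>n. A n \<notin> I" and Adec: "\<forall>n. A (Suc n) \<subseteq> A n" for A
  proof -
    define F where "F n = {j\<in>A n. n \<le> j \<and> K n {i\<in>A n. n \<le> i \<and> i < j}}" for n
    have B: "{k. \<Phi> (\<lambda>n. chi (A n)) k} = (\<Union>n. F n)"
      unfolding \<Phi>_def F_def by (auto simp: chi_def conj_commute)
    have Amono: "A m \<subseteq> A n" if "n \<le> m" for n m
      using Adec that by (metis lift_Suc_antimono_le)
    have Fprops: "finite (F n) \<and> \<not> K n (F n)" for n
    proof -
      have "A n - {..<n} \<notin> I"
      proof
        assume "A n - {..<n} \<in> I"
        then have "(A n - {..<n}) \<union> {..<n} \<in> I" using un fin by blast
        then show False using Apos her by blast
      qed
      then have "\<not> K n (A n - {..<n})" using KI by blast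
      then obtain k where "\<not> (\<exists>E. chi E \<in> C n \<and> (A n - {..<n}) \<inter> {..<k} \<subseteq> E)"
        unfolding K_def by blast
      moreover have "{i\<in>A n. n \<le> i \<and> i < k} \<inter> {..<k} = (A n - {..<n}) \<inter> {..<k}" by auto
      ultimately have ex: "\<not> K n {i\<in>A n. n \<le> i \<and> i < k}" unfolding K_def by metis
      define L where "L = (LEAST k. \<not> K n {i\<in>A n. n \<le> i \<and> i < k})"
      have L1: "\<not> K n {i\<in>A n. n \<le> i \<and> i < L}" unfolding L_def by (rule LeastI[of _ k]) (rule ex)
      have "F n = {i\<in>A n. n \<le> i \<and> i < L}"
      proof (intro set_eqI iffI)
        fix j assume "j \<in> F n"
        then have j: "j \<in> A n" "n \<le> j" "K n {i\<in>A n. n \<le> i \<and> i < j}" unfolding F_def by auto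
        have "j < L"
        proof (rule ccontr)
          assume "\<not> j < L"
          then have "{i\<in>A n. n \<le> i \<and> i < L} \<subseteq> {i\<in>A n. n \<le> i \<and> i < j}" by auto
          then show False using Kher j(3) L1 by blast
        qed
        then show "j \<in> {i\<in>A n. n \<le> i \<and> i < L}" using j by auto
      next
        fix j assume "j \<in> {i\<in>A n. n \<le> i \<and> i < L}"
        then have "j \<in> A n" "n \<le> j" "j < L" by auto
        then have "K n {i\<in>A n. n \<le> i \<and> i < j}" unfolding L_def using not_less_Least by blast
        then show "j \<in> F n" using \<open>j \<in> A n\<close> \<open>n \<le> j\<close> unfolding F_def by auto
      qed
      then show ?thesis using L1 by auto
    qed
    have "(\<Union>n. F n) \<notin> I"
    proof
      assume "(\<Union>n. F n) \<in> I"
      then obtain m where "chi (\<Union>n. F n) \<in> C m" using CU by blast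
      then have "K m (\<Union>n. F n)" unfolding K_def by blast
      then have "K m (F m)" using Kher by blast
      then show False using Fprops by blast
    qed
    moreover have "(\<Union>n. F n) - A n \<in> I" for n
    proof -
      have "(\<Union>n. F n) - A n \<subseteq> (\<Union>m<n. F m)"
      proof
        fix j assume "j \<in> (\<Union>n. F n) - A n"
        then obtain m where "j \<in> F m" "j \<notin> A n" by blast
        moreover have "F m \<subseteq> A m" unfolding F_def by auto
        ultimately have "\<not> n \<le> m" using Amono by blast
        then show "j \<in> (\<Union>m<n. F m)" using \<open>j \<in> F m\<close> by auto
      qed
      moreover have "finite (\<Union>m<n. F m)" using Fprops by auto
      ultimately show ?thesis using fin finite_subset by blast
    qed
    ultimately show ?thesis unfolding B Let_def by blast
  qed
  ultimately show ?thesis unfolding uniformly_weakly_Pplus_def by blast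
qed




lemma section_vimage:
  "section_of (h -` S \<inter> (\<Union>n. (\<lambda>y. n # y) ` Y n)) m = (\<lambda>y. h (m # y)) -` S \<inter> Y m"
  by (auto simp: section_of_def)

lemma finite_borel:
  fixes E :: "nat \<Rightarrow> (nat \<Rightarrow> bool) set"
  assumes "\<And>n. E n \<in> sets (borel :: (nat \<Rightarrow> bool) measure)"
  shows "{x. finite {n. x \<notin> E n}} \<in> sets (borel :: (nat \<Rightarrow> bool) measure)"
proof -
  have eq: "{x. finite {n. x \<notin> E n}} = {x. \<exists>m. \<forall>n. x \<notin> E n \<longrightarrow> n \<le> m}"
    by (auto simp: finite_nat_set_iff_bounded_le)
  have [measurable]: "E n \<in> sets borel" for n by (rule assms)
  have "Measurable.pred borel (\<lambda>x::nat \<Rightarrow> bool. \<exists>m. \<forall>n. x \<notin> E n \<longrightarrow> n \<le> m)"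
    by measurable
  then show ?thesis unfolding eq pred_def by simp
qed

lemma sum_borel:
  assumes "\<And>n h. {x::nat \<Rightarrow> bool. h -` {j. x j} \<inter> Y n \<in> JJ n} \<in> sets borel"
  shows "{x::nat \<Rightarrow> bool. h -` {j. x j} \<inter> (\<Union>n. (\<lambda>y. n # y) ` Y n) \<in>
           {A. A \<subseteq> (\<Union>n. (\<lambda>y. n # y) ` Y n) \<and> finite {n. section_of A n \<notin> JJ n}}} \<in> sets borel"
proof -
  define E where "E n = {x::nat \<Rightarrow> bool. (\<lambda>y. h (n # y)) -` {j. x j} \<inter> Y n \<in> JJ n}" for n
  have "{x::nat \<Rightarrow> bool. h -` {j. x j} \<inter> (\<Union>n. (\<lambda>y. n # y) ` Y n) \<in>
           {A. A \<subseteq> (\<Union>n. (\<lambda>y. n # y) ` Y n) \<and> finite {n. section_of A n \<notin> JJ n}}}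
        = {x. finite {n. x \<notin> E n}}"
    unfolding E_def mem_Collect_eq section_vimage by blast
  moreover have "{x. finite {n. x \<notin> E n}} \<in> sets borel"
    by (rule finite_borel) (unfold E_def, rule assms)
  ultimately show ?thesis by simp
qed

lemma fp_struct:
  "fin_pow r X J \<Longrightarrow> \<exists>Y JJ. X = (\<Union>n. (\<lambda>y. n # y) ` Y n) \<and>
      J = {A. A \<subseteq> X \<and> finite {n. section_of A n \<notin> JJ n}} \<and>
      (\<forall>n h. {x::nat \<Rightarrow> bool. h -` {j. x j} \<inter> Y n \<in> JJ n} \<in> sets borel)"
proof (induction rule: fin_pow.induct)
  case (one r)
  have X: "range (\<lambda>n. [n]) = (\<Union>n. (\<lambda>y. n # y) ` {[]::nat list})" by auto
  have J: "{A. A \<subseteq> range (\<lambda>n. [n]) \<and> finite A} =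
      {A. A \<subseteq> range (\<lambda>n::nat. [n]) \<and> finite {n. section_of A n \<notin> {{}}}}"
  proof (intro Collect_cong conj_cong refl)
    fix A :: "nat list set" assume A: "A \<subseteq> range (\<lambda>n. [n])"
    then have "A = (\<lambda>n. [n]) ` {n. [n] \<in> A}" by auto
    moreover have "{n. section_of A n \<notin> {{}}} = {n. [n] \<in> A}"
      using A by (auto simp: section_of_def)
    moreover have "inj (\<lambda>n::nat. [n])" by (auto simp: inj_def)
    ultimately show "finite A \<longleftrightarrow> finite {n. section_of A n \<notin> {{}}}"
      by (metis finite_imageI inj_on_subset finite_imageD subset_UNIV)
  qed
  have B: "{x::nat \<Rightarrow> bool. h -` {j. x j} \<inter> {[]} \<in> {{}}} \<in> sets borel" for h :: "nat list \<Rightarrow> nat"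
  proof -
    have "{x::nat \<Rightarrow> bool. h -` {j. x j} \<inter> {[]} \<in> {{}}} = {x. \<not> x (h [])}" by auto
    moreover have "{x::nat \<Rightarrow> bool. \<not> x (h [])} \<in> sets borel"
      using borel_coord[of "h []"] by (metis Compl_eq_Diff_UNIV Compl_iff Collect_neg_eq sets.compl_sets space_borel)
    ultimately show ?thesis by simp
  qed
  show ?case
    by (rule exI[of _ "\<lambda>_. {[]}"], rule exI[of _ "\<lambda>_. {{}}"]) (use X J B in auto)
next
  case (succ r X J r' m)
  then obtain Y JJ where s: "X = (\<Union>n. (\<lambda>y. n # y) ` Y n)"
      "J = {A. A \<subseteq> X \<and> finite {n. section_of A n \<notin> JJ n}}"
      "\<forall>n h. {x::nat \<Rightarrow> bool. h -` {j. x j} \<inter> Y n \<in> JJ n} \<in> sets borel" by blast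
  have b: "{x::nat \<Rightarrow> bool. h -` {j. x j} \<inter> X \<in> J} \<in> sets borel" for h
    unfolding s(2) unfolding s(1) by (rule sum_borel) (use s(3) in blast)
  show ?case
    by (rule exI[of _ "\<lambda>_. X"], rule exI[of _ "\<lambda>_. J"]) (use b in simp)
next
  case (limit s X J r)
  have "{x::nat \<Rightarrow> bool. h -` {j. x j} \<inter> X n \<in> J n} \<in> sets borel" for h n
  proof -
    obtain Y JJ where s: "X n = (\<Union>k. (\<lambda>y. k # y) ` Y k)"
      "J n = {A. A \<subseteq> X n \<and> finite {k. section_of A k \<notin> JJ k}}"
      "\<forall>k h. {x::nat \<Rightarrow> bool. h -` {j. x j} \<inter> Y k \<in> JJ k} \<in> sets borel"
      using conjunct2[OF spec[OF limit(1), of n]] by (elim exE conjE) blast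
    show ?thesis
      unfolding s(2) unfolding s(1) by (rule sum_borel) (use s(3) in blast)
  qed
  then show ?case
    by (rule_tac exI[of _ "X"], rule_tac exI[of _ "J"]) simp
qed




primrec mm :: "(nat \<Rightarrow> nat set \<Rightarrow> bool) \<Rightarrow> (nat \<Rightarrow> nat \<Rightarrow> bool) \<Rightarrow> nat \<Rightarrow> nat" where
  "mm Q x 0 = (LEAST m. \<not> Q m {j. x 0 j})"
| "mm Q x (Suc k) = (LEAST m. mm Q x k < m \<and> \<not> Q m {j. x (Suc k) j})"

lemma pos_meas:
  assumes "{x::nat \<Rightarrow> bool. Q {j. x j}} \<in> sets borel"
  shows "Measurable.pred borel (\<lambda>x::nat \<Rightarrow> nat \<Rightarrow> bool. Q {j. x k j})"
proof -
  have p: "Measurable.pred borel (\<lambda>y::nat \<Rightarrow> bool. Q {j. y j})"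
    using assms unfolding pred_def by simp
  have c: "(\<lambda>x::nat \<Rightarrow> nat \<Rightarrow> bool. x k) \<in> borel_measurable borel" by simp
  show ?thesis using measurable_compose[OF c p] by simp
qed

lemma mm_meas:
  assumes "\<And>m. {x::nat \<Rightarrow> bool. Q m {j. x j}} \<in> sets borel"
  shows "(\<lambda>x. mm Q x k) \<in> measurable borel (count_space UNIV)"
proof (induction k)
  case 0
  show ?case
    by (simp, rule measurable_Least, rule pred_intros_logic(2), rule pos_meas[OF assms])
next
  case (Suc k)
  have l: "Measurable.pred borel (\<lambda>x. mm Q x k < m)" for m
    using measurable_compose[OF Suc, of "\<lambda>n. n < m" "count_space UNIV"] by simp
  show ?case
    by (simp, rule measurable_Least, rule pred_intros_logic(3)[OF l],
        rule pred_intros_logic(2), rule pos_meas[OF assms])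
qed

lemma block_case:
  fixes I :: "nat set set" and Q :: "nat \<Rightarrow> nat set \<Rightarrow> bool" and S :: "nat \<Rightarrow> nat set"
  assumes id: "ideal_on (UNIV :: nat set) I"
    and Ieq: "\<And>A. A \<in> I \<longleftrightarrow> finite {m. \<not> Q m A}"
    and Qloc: "\<And>m A. Q m A \<longleftrightarrow> Q m (A \<inter> S m)"
    and disj: "\<And>m m'. m \<noteq> m' \<Longrightarrow> S m \<inter> S m' = {}"
    and bor: "\<And>m. {x::nat \<Rightarrow> bool. Q m {j. x j}} \<in> sets borel"
  shows "uniformly_weakly_Pplus I"
proof -
  have her: "B \<in> I" if "A \<in> I" "B \<subseteq> A" for A B using id that unfolding ideal_on_def by blast
  have emp: "{} \<in> I" using id by (simp add: ideal_on_def)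
  have blocks: "\<Union> (S ` M) \<in> I" if "finite M" for M
  proof -
    have "{m. \<not> Q m (\<Union> (S ` M))} \<subseteq> M \<union> {m. \<not> Q m {}}"
    proof
      fix m assume m: "m \<in> {m. \<not> Q m (\<Union> (S ` M))}"
      show "m \<in> M \<union> {m. \<not> Q m {}}"
      proof (cases "m \<in> M")
        case False
        have "S m' \<inter> S m = {}" if "m' \<in> M" for m' using disj[of m' m] False that by blast
        then have e: "\<Union> (S ` M) \<inter> S m = {}" by blast
        have q1: "Q m (\<Union> (S ` M)) = Q m (\<Union> (S ` M) \<inter> S m)" by (rule Qloc)
        have "Q m (\<Union> (S ` M)) \<longleftrightarrow> Q m {}" using q1 by (simp only: e)
        then show ?thesis using m by auto
      qed simp
    qed
    moreover have "finite {m. \<not> Q m {}}" using emp Ieq[of "{}"] by simp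
    ultimately have "finite {m. \<not> Q m (\<Union> (S ` M))}"
      using that by (meson finite_Un finite_subset)
    then show ?thesis using Ieq by blast
  qed
  define \<Phi> where "\<Phi> x j = (\<exists>k. j \<in> S (mm Q x k) \<and> x k j)" for x :: "nat \<Rightarrow> nat \<Rightarrow> bool" and j
  have "\<Phi> \<in> borel_measurable borel"
  proof (rule measurable_coordinatewise_then_product)
    fix j
    have a: "Measurable.pred borel (\<lambda>x. j \<in> S (mm Q x k))" for k
      using measurable_compose[OF mm_meas[OF bor, where k=k], of "\<lambda>n. j \<in> S n" "count_space UNIV"] by simp
    have "Measurable.pred borel (\<lambda>x. \<Phi> x j)"
      unfolding \<Phi>_def by (rule pred_intros_countable(2), rule pred_intros_logic(3)[OF a], rule pred_coord2)
    then show "(\<lambda>x. \<Phi> x j) \<in> borel_measurable borel" by (rule pred_to_borel)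
  qed
  moreover have "(let B = {k. \<Phi> (\<lambda>n. chi (A n)) k} in B \<notin> I \<and> (\<forall>n. B - A n \<in> I))"
    if Apos: "\<forall>n. A n \<notin> I" and Adec: "\<forall>n. A (Suc n) \<subseteq> A n" for A
  proof -
    define x where "x = (\<lambda>n. chi (A n))"
    have xA: "{j. x k j} = A k" for k unfolding x_def chi_def by simp
    define M where "M k = mm Q x k" for k
    have inf: "infinite {m. \<not> Q m (A k)}" for k using Apos Ieq by blast
    have M0: "\<not> Q (M 0) (A 0)"
    proof -
      obtain m where "\<not> Q m (A 0)" using inf[of 0] not_finite_existsD by blast
      then show ?thesis unfolding M_def by (simp add: xA) (rule LeastI)
    qed
    have MS: "M k < M (Suc k) \<and> \<not> Q (M (Suc k)) (A (Suc k))" for k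
    proof -
      obtain m where "m > M k" "\<not> Q m (A (Suc k))"
        using inf[of "Suc k"] unfolding infinite_nat_iff_unbounded by blast
      then show ?thesis unfolding M_def using LeastI[of "\<lambda>m. mm Q x k < m \<and> \<not> Q m (A (Suc k))" m]
        by (simp add: xA)
    qed
    have Mpos: "\<not> Q (M k) (A k)" for k using M0 MS by (cases k) auto
    have smM: "strict_mono M" using MS by (simp add: strict_mono_Suc_iff)
    then have injM: "inj M" by (rule strict_mono_imp_inj_on)
    define B where "B = {j. \<exists>k. j \<in> S (M k) \<and> j \<in> A k}"
    have Bdef: "{k. \<Phi> (\<lambda>n. chi (A n)) k} = B"
      unfolding B_def \<Phi>_def M_def x_def by (simp add: chi_def)
    have Amono: "A m \<subseteq> A n" if "n \<le> m" for n m
      using Adec that by (metis lift_Suc_antimono_le)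
    have BS: "B \<inter> S (M k) = A k \<inter> S (M k)" for k
    proof
      show "B \<inter> S (M k) \<subseteq> A k \<inter> S (M k)"
      proof
        fix j assume "j \<in> B \<inter> S (M k)"
        then obtain k' where "j \<in> S (M k')" "j \<in> A k'" "j \<in> S (M k)" unfolding B_def by blast
        then have "M k' = M k" using disj by blast
        then have "k' = k" using injM by (simp add: inj_eq)
        then show "j \<in> A k \<inter> S (M k)" using \<open>j \<in> A k'\<close> \<open>j \<in> S (M k)\<close> by simp
      qed
    qed (auto simp: B_def)
    have "\<not> Q (M k) B" for k
    proof -
      have "Q (M k) B = Q (M k) (B \<inter> S (M k))" by (rule Qloc)
      also have "\<dots> = Q (M k) (A k \<inter> S (M k))" by (simp only: BS)
      also have "\<dots> = Q (M k) (A k)" by (rule Qloc[symmetric])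
      finally show ?thesis using Mpos[of k] by simp
    qed
    then have "range M \<subseteq> {m. \<not> Q m B}" by blast
    moreover have "infinite (range M)" using injM by (rule range_inj_infinite)
    ultimately have "B \<notin> I" using Ieq finite_subset by blast
    moreover have "B - A n \<in> I" for n
    proof -
      have "B - A n \<subseteq> \<Union> (S ` (M ` {..<n}))"
      proof
        fix j assume "j \<in> B - A n"
        then obtain k where "j \<in> S (M k)" "j \<in> A k" "j \<notin> A n" unfolding B_def by blast
        then have "k < n" using Amono by (meson not_less subsetD)
        then show "j \<in> \<Union> (S ` (M ` {..<n}))" using \<open>j \<in> S (M k)\<close> by blast
      qed
      moreover have "\<Union> (S ` (M ` {..<n})) \<in> I" by (rule blocks) simp
      ultimately show ?thesis using her by blast
    qed
    ultimately show ?thesis unfolding Bdef Let_def by blast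
  qed
  ultimately show ?thesis unfolding uniformly_weakly_Pplus_def by blast
qed


lemma finpow_case:
  fixes I :: "nat set set"
  assumes id: "ideal_on (UNIV :: nat set) I"
    and fp: "fin_pow r X J" and iso: "ideal_iso X J (UNIV :: nat set) I"
  shows "uniformly_weakly_Pplus I"
proof -
  obtain Y JJ where s: "X = (\<Union>n. (\<lambda>y. n # y) ` Y n)"
      "J = {A. A \<subseteq> X \<and> finite {n. section_of A n \<notin> JJ n}}"
      "\<forall>n h. {x::nat \<Rightarrow> bool. h -` {j. x j} \<inter> Y n \<in> JJ n} \<in> sets borel"
    using fp_struct[OF fp] by (elim exE conjE) blast
  obtain f where f: "bij_betw f X (UNIV :: nat set)"
      and fI: "\<forall>A. A \<subseteq> UNIV \<longrightarrow> (A \<in> I \<longleftrightarrow> f -` A \<inter> X \<in> J)"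
    using iso unfolding ideal_iso_def by blast
  have injf: "inj_on f X" using f by (rule bij_betw_imp_inj_on)
  define Q where "Q m A = (section_of (f -` A \<inter> X) m \<in> JJ m)" for m A
  define S where "S m = f ` ((\<lambda>y. m # y) ` Y m)" for m
  have sec: "section_of (f -` A \<inter> X) m = (\<lambda>y. f (m # y)) -` A \<inter> Y m" for A m
    unfolding s(1) by (rule section_vimage)
  have Ieq: "A \<in> I \<longleftrightarrow> finite {m. \<not> Q m A}" for A
  proof -
    have "A \<in> I \<longleftrightarrow> f -` A \<inter> X \<in> J" using fI by blast
    also have "\<dots> \<longleftrightarrow> finite {m. \<not> Q m A}"
      by (subst s(2)) (auto simp: Q_def)
    finally show ?thesis .
  qed
  have Qloc: "Q m A \<longleftrightarrow> Q m (A \<inter> S m)" for m A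
  proof -
    have "(\<lambda>y. f (m # y)) -` A \<inter> Y m = (\<lambda>y. f (m # y)) -` (A \<inter> S m) \<inter> Y m"
      by (auto simp: S_def)
    then show ?thesis unfolding Q_def sec by simp
  qed
  have disj: "S m \<inter> S m' = {}" if "m \<noteq> m'" for m m'
  proof (rule ccontr)
    assume "S m \<inter> S m' \<noteq> {}"
    then obtain y y' where y: "y \<in> Y m" "y' \<in> Y m'" "f (m # y) = f (m' # y')"
      unfolding S_def by blast
    have "m # y \<in> X" "m' # y' \<in> X" using y s(1) by blast+
    then have "m # y = m' # y'" using injf y(3) by (meson inj_onD)
    then show False using that by simp
  qed
  have bor: "{x::nat \<Rightarrow> bool. Q m {j. x j}} \<in> sets borel" for m
  proof -
    have "{x::nat \<Rightarrow> bool. Q m {j. x j}} = {x. (\<lambda>y. f (m # y)) -` {j. x j} \<inter> Y m \<in> JJ m}"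
      unfolding Q_def sec by simp
    then show ?thesis using s(3) by simp
  qed
  show ?thesis by (rule block_case[OF id Ieq Qloc disj bor])
qed

theorem lemma5p3:
  fixes I :: "nat set set"
  assumes "ideal_on (UNIV :: nat set) I"
    and "contains_fin I"
    and "fsigma_in euclidean (chi ` I) \<or>
         (\<exists>r X J. fin_pow r X J \<and> ideal_iso X J (UNIV :: nat set) I)"
  shows "uniformly_weakly_Pplus I"
  using assms(3)
proof
  assume "fsigma_in euclidean (chi ` I)"
  then show ?thesis by (rule fsigma_case[OF assms(1) assms(2)])
next
  assume "\<exists>r X J. fin_pow r X J \<and> ideal_iso X J (UNIV :: nat set) I"
  then obtain r X J where "fin_pow r X J" "ideal_iso X J (UNIV :: nat set) I" by blast
  then show ?thesis by (rule finpow_case[OF assms(1)])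
qed

end
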